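(* For positive integers $n$, $k$ and $r$, \[S_{\leq m}(n,k,r)=(k-1)!\binom{k+r-1}{k-1}{n\brace k+r-1}_{\leq m}.\]
   Context: $S_{\leq m}(n,k,r)$ (mixed restricted Stirling number of the second kind) is the number of ways to distribute the elements of $[n]$ into non-empty cells, where there are $r$ cells carrying the label $1$ (indistinguishable among themselves) and one cell each with labels $2,\dots,k$, such that every cell contains at most $m$ elements. ${n\brace k}_{\leq m}$ is the number of partitions of $[n]$ into $k$ non-empty blocks each of size at most $m$. *)

theory Defs
  imports Main "HOL-Library.Disjoint_Sets" "HOL-Library.FuncSet"
begin

definition stirling_le :: "nat \<Rightarrow> nat \<Rightarrow> nat \<Rightarrow> nat" where
  "stirling_le m n k =
     card {P. partition_on {1..n} P \<and> card P = k \<and> (\<forall>B\<in>P. card B \<le> m)}"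

text \<open>Mixed restricted Stirling number S_{<=m}(n,k,r): distributions of {1..n}
  into non-empty cells, where r cells carry label 1 (indistinguishable, hence
  given as a set U of r blocks) and one cell each carries label 2,...,k
  (given as an injective map g on {2..k}); cells are pairwise distinct and
  disjoint, cover {1..n}, and each has at most m elements.\<close>
definition mixed_stirling_le :: "nat \<Rightarrow> nat \<Rightarrow> nat \<Rightarrow> nat \<Rightarrow> nat" where
  "mixed_stirling_le m n k r =
     card {(U, g). U \<subseteq> Pow {1..n} \<and> card U = r \<and>
                  g \<in> {2..k} \<rightarrow>\<^sub>E Pow {1..n} \<and> inj_on g {2..k} \<and>
                  U \<inter> g ` {2..k} = {} \<and>
                  partition_on {1..n} (U \<union> g ` {2..k}) \<and>
                  (\<forall>B \<in> U \<union> g ` {2..k}. card B \<le> m)}"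

end

theory Submission
  imports Defs
begin

lemma prod_minus_fact_choose:
  "j \<le> N \<Longrightarrow> (\<Prod>i\<in>{0..<j}. (N::nat) - i) = fact j * (N choose j)"
proof (induction j)
  case 0
  then show ?case by simp
next
  case (Suc j)
  then have 1: "(\<Prod>i\<in>{0..<Suc j}. N - i) = fact j * ((N choose j) * (N - j))" by simp
  have 2: "(N choose j) * (N - j) = (N choose Suc j) * Suc j"
    by (metis binomial_absorb_comp binomial_absorption mult.commute)
  show ?case unfolding 1 2 by (simp add: algebra_simps)
qed

lemma card_inj_funcs:
  assumes "finite A" "finite C" "card A \<le> card C"
  shows "card {f \<in> A \<rightarrow>\<^sub>E C. inj_on f A} = fact (card A) * (card C choose card A)"
  using card_inj_on_subset_funcset[OF assms(1) assms(2) order_refl] prod_minus_fact_choose[OF assms(3)]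
  by simp

theorem mainTheorem12:
  fixes n k r m :: nat
  assumes "n > 0" and "k > 0" and "r > 0"
  shows "mixed_stirling_le m n k r =
           fact (k - 1) * ((k + r - 1) choose (k - 1)) * stirling_le m n (k + r - 1)"
proof -
  define A where "A = {2..k}"
  define Parts where "Parts = {P. partition_on {1..n} P \<and> card P = k + r - 1 \<and> (\<forall>B\<in>P. card B \<le> m)}"
  define M where "M = {(U, g). U \<subseteq> Pow {1..n} \<and> card U = r \<and>
                  g \<in> A \<rightarrow>\<^sub>E Pow {1..n} \<and> inj_on g A \<and>
                  U \<inter> g ` A = {} \<and>
                  partition_on {1..n} (U \<union> g ` A) \<and>
                  (\<forall>B \<in> U \<union> g ` A. card B \<le> m)}"
  define F where "F P = {g \<in> A \<rightarrow>\<^sub>E P. inj_on g A}" for P :: "nat set set"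
  have cardA: "card A = k - 1" unfolding A_def by simp
  have finA: "finite A" unfolding A_def by simp
  have partsub: "P \<subseteq> Pow {1..n}" if "partition_on {1..n} P" for P
    using that unfolding partition_on_def by auto
  have finP: "finite P" if "partition_on {1..n} P" for P
    using partsub[OF that] finite_subset by (metis finite_Pow_iff finite_atLeastAtMost)
  have bij: "bij_betw (\<lambda>(U, g). (U \<union> g ` A, g)) M (Sigma Parts F)"
  proof (rule bij_betw_byWitness[where f' = "\<lambda>(P, g). (P - g ` A, g)"])
    show "\<forall>a\<in>M. (case case a of (U, g) \<Rightarrow> (U \<union> g ` A, g) of (P, g) \<Rightarrow> (P - g ` A, g)) = a"
      unfolding M_def by auto
    show "\<forall>a'\<in>Sigma Parts F. (case case a' of (P, g) \<Rightarrow> (P - g ` A, g) of (U, g) \<Rightarrow> (U \<union> g ` A, g)) = a'"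
      unfolding Parts_def F_def by (auto simp: PiE_def Pi_def)
    show "(\<lambda>(U, g). (U \<union> g ` A, g)) ` M \<subseteq> Sigma Parts F"
    proof safe
      fix U g assume "(U, g) \<in> M"
      then have U: "U \<subseteq> Pow {1..n}" "card U = r" "g \<in> A \<rightarrow>\<^sub>E Pow {1..n}" "inj_on g A"
        "U \<inter> g ` A = {}" "partition_on {1..n} (U \<union> g ` A)" "\<forall>B \<in> U \<union> g ` A. card B \<le> m"
        unfolding M_def by auto
      have "finite (U \<union> g ` A)" using finP U(6) by blast
      then have "card (U \<union> g ` A) = card U + card (g ` A)"
        using U(5) card_Un_disjoint by blast
      also have "card (g ` A) = k - 1" using U(4) card_image cardA by metis
      finally have "card (U \<union> g ` A) = k + r - 1" using U(2) assms by simp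
      then show "U \<union> g ` A \<in> Parts" unfolding Parts_def using U by auto
      show "g \<in> F (U \<union> g ` A)" unfolding F_def using U(3,4) by (auto simp: PiE_def Pi_def)
    qed
    show "(\<lambda>(P, g). (P - g ` A, g)) ` Sigma Parts F \<subseteq> M"
    proof safe
      fix P g assume "P \<in> Parts" "g \<in> F P"
      then have P: "partition_on {1..n} P" "card P = k + r - 1" "\<forall>B\<in>P. card B \<le> m"
        and g: "g \<in> A \<rightarrow>\<^sub>E P" "inj_on g A"
        unfolding Parts_def F_def by auto
      have sub: "g ` A \<subseteq> P" using g(1) by auto
      have eq: "P - g ` A \<union> g ` A = P" using sub by auto
      have "card (P - g ` A) = card P - card (g ` A)"
        using sub finP[OF P(1)] by (meson card_Diff_subset finite_subset)
      also have "card (g ` A) = k - 1" using g(2) card_image cardA by metis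
      finally have c: "card (P - g ` A) = r" using P(2) assms by simp
      have "g \<in> A \<rightarrow>\<^sub>E Pow {1..n}" using g(1) partsub[OF P(1)] by (auto simp: PiE_def Pi_def)
      then show "(P - g ` A, g) \<in> M" unfolding M_def using P g c eq partsub[OF P(1)] by auto
    qed
  qed
  have "mixed_stirling_le m n k r = card M"
    unfolding mixed_stirling_le_def M_def A_def by simp
  also have "\<dots> = card (Sigma Parts F)" using bij_betw_same_card[OF bij] .
  also have "\<dots> = (\<Sum>P\<in>Parts. card (F P))"
  proof (rule card_SigmaI)
    show "finite Parts"
      by (rule finite_subset[of _ "Pow (Pow {1..n})"]) (use partsub in \<open>auto simp: Parts_def\<close>)
    show "\<forall>P\<in>Parts. finite (F P)"
    proof
      fix P assume "P \<in> Parts"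
      then have "finite P" using finP unfolding Parts_def by auto
      then have "finite (A \<rightarrow>\<^sub>E P)" using finA by (simp add: finite_PiE)
      then show "finite (F P)" unfolding F_def by simp
    qed
  qed
  also have "\<dots> = (\<Sum>P\<in>Parts. fact (k - 1) * ((k + r - 1) choose (k - 1)))"
  proof (rule sum.cong)
    fix P assume "P \<in> Parts"
    then have P: "partition_on {1..n} P" "card P = k + r - 1" unfolding Parts_def by auto
    show "card (F P) = fact (k - 1) * ((k + r - 1) choose (k - 1))"
      unfolding F_def using card_inj_funcs[OF finA finP[OF P(1)]] P cardA by simp
  qed simp
  also have "\<dots> = fact (k - 1) * ((k + r - 1) choose (k - 1)) * card Parts" by simp
  also have "card Parts = stirling_le m n (k + r - 1)" unfolding stirling_le_def Parts_def ..
  finally show ?thesis .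
qed

end
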